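(* Let $P$ be an irreducible transition matrix on a finite set $G$ with $|G|\ge2$, reversible with respect to the probability measure $\pi$. Then for every $S\subset G$ and every $x\in S$, $$h_S(x)\le u(P)^{-1}\,\pi(x)\,\mathbb E_x[T_S^+].$$
   Context: $(X_t)$ is the chain with transition matrix $P$. For $A\subset G$, $T_A=\inf\{t\ge0:X_t\in A\}$ and $T_A^+=\inf\{t\ge1:X_t\in A\}$. $\Pr_z,\mathbb E_z$ refer to the chain started at $z$. $u(P):=\min_{x\neq y}\Pr_x[T_y<T_x^+]$. The harmonic measure on $S$ from $y$ is $h_{y,S}(x)=\Pr_y[X_{T_S}=x]$, and the harmonic measure from stationarity is $h_S(x)=\sum_{y\in G}\pi(y)h_{y,S}(x)$. *)

theory Defs
  imports Complex_Main
begin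

text \<open>Markov chain on a finite type 'a (the state space G = UNIV), transition matrix
  P :: 'a => 'a => real. All path-probability quantities are computed by summing over
  the first step / the time index, i.e. from the law of the chain on finite paths.\<close>

definition stochastic :: "('a::finite \<Rightarrow> 'a \<Rightarrow> real) \<Rightarrow> bool" where
  "stochastic P \<longleftrightarrow> (\<forall>x y. P x y \<ge> 0) \<and> (\<forall>x. (\<Sum>y\<in>UNIV. P x y) = 1)"

definition irreducible :: "('a::finite \<Rightarrow> 'a \<Rightarrow> real) \<Rightarrow> bool" where
  "irreducible P \<longleftrightarrow> (\<forall>x y. (x, y) \<in> {(a, b). P a b > 0}\<^sup>*)"

definition prob_vec :: "('a::finite \<Rightarrow> real) \<Rightarrow> bool" where
  "prob_vec \<mu> \<longleftrightarrow> (\<forall>x. \<mu> x \<ge> 0) \<and> (\<Sum>x\<in>UNIV. \<mu> x) = 1"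

definition reversible :: "('a::finite \<Rightarrow> 'a \<Rightarrow> real) \<Rightarrow> ('a \<Rightarrow> real) \<Rightarrow> bool" where
  "reversible P \<mu> \<longleftrightarrow> (\<forall>x y. \<mu> x * P x y = \<mu> y * P y x)"

text \<open>hit_at P A n z x = Pr_z[T_A = n, X_{T_A} = x], where T_A = inf{t >= 0. X_t \<in> A}.\<close>
fun hit_at :: "('a::finite \<Rightarrow> 'a \<Rightarrow> real) \<Rightarrow> 'a set \<Rightarrow> nat \<Rightarrow> 'a \<Rightarrow> 'a \<Rightarrow> real" where
  "hit_at P A 0 z x = (if z \<in> A \<and> z = x then 1 else 0)"
| "hit_at P A (Suc n) z x = (if z \<in> A then 0 else (\<Sum>w\<in>UNIV. P z w * hit_at P A n w x))"

text \<open>hitp_at P A n z x = Pr_z[T_A^+ = n, X_{T_A^+} = x], where T_A^+ = inf{t >= 1. X_t \<in> A}.\<close>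
fun hitp_at :: "('a::finite \<Rightarrow> 'a \<Rightarrow> real) \<Rightarrow> 'a set \<Rightarrow> nat \<Rightarrow> 'a \<Rightarrow> 'a \<Rightarrow> real" where
  "hitp_at P A 0 z x = 0"
| "hitp_at P A (Suc n) z x = (\<Sum>w\<in>UNIV. P z w * hit_at P A n w x)"

definition harm :: "('a::finite \<Rightarrow> 'a \<Rightarrow> real) \<Rightarrow> 'a \<Rightarrow> 'a set \<Rightarrow> 'a \<Rightarrow> real" where
  "harm P y S x = (\<Sum>n. hit_at P S n y x)"

definition harm_stat :: "('a::finite \<Rightarrow> 'a \<Rightarrow> real) \<Rightarrow> ('a \<Rightarrow> real) \<Rightarrow> 'a set \<Rightarrow> 'a \<Rightarrow> real" where
  "harm_stat P \<mu> S x = (\<Sum>y\<in>UNIV. \<mu> y * harm P y S x)"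

text \<open>Pr_x[T_y < T_x^+] for x \<noteq> y: the first visit at times >= 1 to {x,y} is at y.\<close>
definition escape :: "('a::finite \<Rightarrow> 'a \<Rightarrow> real) \<Rightarrow> 'a \<Rightarrow> 'a \<Rightarrow> real" where
  "escape P x y = (\<Sum>n. hitp_at P {x, y} n x y)"

definition u_P :: "('a::finite \<Rightarrow> 'a \<Rightarrow> real) \<Rightarrow> real" where
  "u_P P = Min {escape P x y | x y. x \<noteq> y}"

text \<open>E_z[T_A^+] = sum_n n Pr_z[T_A^+ = n] (the chain is irreducible on a finite space in the
  theorem, so T_A^+ is a.s. finite with finite mean for nonempty A).\<close>
definition exp_return :: "('a::finite \<Rightarrow> 'a \<Rightarrow> real) \<Rightarrow> 'a set \<Rightarrow> 'a \<Rightarrow> real" where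
  "exp_return P A z = (\<Sum>n. real n * (\<Sum>x\<in>UNIV. hitp_at P A n z x))"

end

theory Submission imports Defs begin

fun mp :: "('a::finite \<Rightarrow> 'a \<Rightarrow> real) \<Rightarrow> nat \<Rightarrow> 'a \<Rightarrow> 'a \<Rightarrow> real" where
  "mp M 0 a b = (if a = b then 1 else 0)"
| "mp M (Suc n) a b = (\<Sum>w\<in>UNIV. M a w * mp M n w b)"

lemma mp_add: "mp M (n + m) a b = (\<Sum>u\<in>UNIV. mp M n a u * mp M m u b)"
proof (induction n arbitrary: a)
  case 0
  have "(\<Sum>u\<in>UNIV. (if a = u then 1 else 0) * mp M m u b) = (\<Sum>u\<in>UNIV. if a = u then mp M m u b else 0)"
    by (rule sum.cong) auto
  then show ?case by (simp add: sum.delta)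
next
  case (Suc n)
  have "mp M (Suc n + m) a b = (\<Sum>w\<in>UNIV. M a w * (\<Sum>u\<in>UNIV. mp M n w u * mp M m u b))"
    using Suc by simp
  also have "\<dots> = (\<Sum>w\<in>UNIV. \<Sum>u\<in>UNIV. M a w * mp M n w u * mp M m u b)"
    by (simp add: sum_distrib_left mult.assoc)
  also have "\<dots> = (\<Sum>u\<in>UNIV. \<Sum>w\<in>UNIV. M a w * mp M n w u * mp M m u b)"
    by (rule sum.swap)
  also have "\<dots> = (\<Sum>u\<in>UNIV. mp M (Suc n) a u * mp M m u b)"
    by (simp add: sum_distrib_right)
  finally show ?case .
qed

lemma mp_Suc_right: "mp M (Suc n) a b = (\<Sum>w\<in>UNIV. mp M n a w * M w b)"
proof -
  have "mp M (n + 1) a b = (\<Sum>w\<in>UNIV. mp M n a w * mp M 1 w b)" by (rule mp_add)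
  moreover have "mp M 1 w b = M w b" for w
  proof -
    have "mp M 1 w b = (\<Sum>u\<in>UNIV. if u = b then M w u else 0)"
      unfolding One_nat_def mp.simps by (rule sum.cong) auto
    then show ?thesis by (simp add: sum.delta')
  qed
  ultimately show ?thesis by simp
qed

lemma mp_nonneg: "(\<And>a b. M a b \<ge> 0) \<Longrightarrow> mp M n a b \<ge> 0"
  by (induction n arbitrary: a) (auto intro!: sum_nonneg)

definition MM :: "('a::finite \<Rightarrow> 'a \<Rightarrow> real) \<Rightarrow> 'a set \<Rightarrow> 'a \<Rightarrow> 'a \<Rightarrow> real" where
  "MM P S a b = (if a \<in> S then 0 else P a b)"
definition NN :: "('a::finite \<Rightarrow> 'a \<Rightarrow> real) \<Rightarrow> 'a set \<Rightarrow> 'a \<Rightarrow> 'a \<Rightarrow> real" where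
  "NN P S a b = (if b \<in> S then 0 else P a b)"
definition tau :: "('a::finite \<Rightarrow> 'a \<Rightarrow> real) \<Rightarrow> 'a set \<Rightarrow> nat \<Rightarrow> 'a \<Rightarrow> real" where
  "tau P S n a = (\<Sum>y\<in>UNIV. mp (NN P S) n a y)"
definition pp :: "('a::finite \<Rightarrow> 'a \<Rightarrow> real) \<Rightarrow> 'a set \<Rightarrow> nat \<Rightarrow> 'a \<Rightarrow> real" where
  "pp P S n a = (\<Sum>z\<in>UNIV. hitp_at P S n a z)"

lemma hit_mp: "hit_at P S n y z = (if z \<in> S then mp (MM P S) n y z else 0)"
  by (induction n arbitrary: y) (auto simp: MM_def sum_distrib_left intro!: sum.cong)

lemma hit_nonneg: "stochastic P \<Longrightarrow> hit_at P S n y z \<ge> 0"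
  unfolding hit_mp by (auto intro!: mp_nonneg simp: MM_def stochastic_def)

lemma hitp_nonneg: "stochastic P \<Longrightarrow> hitp_at P S n y z \<ge> 0"
  by (cases n) (auto intro!: sum_nonneg mult_nonneg_nonneg hit_nonneg simp: stochastic_def)

lemma MN_nonneg: "stochastic P \<Longrightarrow> MM P S a b \<ge> 0" "stochastic P \<Longrightarrow> NN P S a b \<ge> 0"
  by (auto simp: MM_def NN_def stochastic_def)

lemma swapPM: "(\<Sum>w\<in>UNIV. P a w * mp (MM P S) n w z) = (\<Sum>u\<in>UNIV. mp (NN P S) n a u * P u z)"
proof (induction n arbitrary: a)
  case 0
  have "(\<Sum>w\<in>UNIV. P a w * mp (MM P S) 0 w z) = (\<Sum>w\<in>UNIV. if w = z then P a w else 0)"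
    by (rule sum.cong) auto
  moreover have "(\<Sum>u\<in>UNIV. mp (NN P S) 0 a u * P u z) = (\<Sum>u\<in>UNIV. if a = u then P u z else 0)"
    by (rule sum.cong) auto
  ultimately show ?case by (simp add: sum.delta sum.delta')
next
  case (Suc n)
  have "(\<Sum>w\<in>UNIV. P a w * mp (MM P S) (Suc n) w z)
      = (\<Sum>w\<in>UNIV. \<Sum>v\<in>UNIV. P a w * MM P S w v * mp (MM P S) n v z)"
    by (simp add: sum_distrib_left mult.assoc)
  also have "\<dots> = (\<Sum>v\<in>UNIV. \<Sum>w\<in>UNIV. P a w * MM P S w v * mp (MM P S) n v z)"
    by (rule sum.swap)
  also have "\<dots> = (\<Sum>v\<in>UNIV. \<Sum>w\<in>UNIV. NN P S a w * P w v * mp (MM P S) n v z)"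
    by (rule sum.cong, simp, rule sum.cong) (auto simp: MM_def NN_def)
  also have "\<dots> = (\<Sum>w\<in>UNIV. \<Sum>v\<in>UNIV. NN P S a w * P w v * mp (MM P S) n v z)"
    by (rule sum.swap)
  also have "\<dots> = (\<Sum>w\<in>UNIV. NN P S a w * (\<Sum>v\<in>UNIV. P w v * mp (MM P S) n v z))"
    by (simp add: sum_distrib_left mult.assoc)
  also have "\<dots> = (\<Sum>w\<in>UNIV. NN P S a w * (\<Sum>u\<in>UNIV. mp (NN P S) n w u * P u z))"
    using Suc by simp
  also have "\<dots> = (\<Sum>w\<in>UNIV. \<Sum>u\<in>UNIV. NN P S a w * mp (NN P S) n w u * P u z)"
    by (simp add: sum_distrib_left mult.assoc)
  also have "\<dots> = (\<Sum>u\<in>UNIV. \<Sum>w\<in>UNIV. NN P S a w * mp (NN P S) n w u * P u z)"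
    by (rule sum.swap)
  also have "\<dots> = (\<Sum>u\<in>UNIV. mp (NN P S) (Suc n) a u * P u z)"
    by (simp add: sum_distrib_right)
  finally show ?case .
qed

lemma hitp_Suc: "hitp_at P S (Suc n) a z = (if z \<in> S then (\<Sum>u\<in>UNIV. mp (NN P S) n a u * P u z) else 0)"
  by (simp add: hit_mp swapPM[symmetric] cong: if_cong)

lemma pp_Suc:
  assumes "stochastic P"
  shows "pp P S (Suc n) a = tau P S n a - tau P S (Suc n) a"
proof -
  have "pp P S (Suc n) a = (\<Sum>z\<in>UNIV. \<Sum>u\<in>UNIV. mp (NN P S) n a u * (if z \<in> S then P u z else 0))"
    unfolding pp_def hitp_Suc by (rule sum.cong) auto
  also have "\<dots> = (\<Sum>u\<in>UNIV. mp (NN P S) n a u * (\<Sum>z\<in>UNIV. (if z \<in> S then P u z else 0)))"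
    by (subst sum.swap) (simp add: sum_distrib_left)
  finally have 1: "pp P S (Suc n) a = \<dots>" .
  have "tau P S (Suc n) a = (\<Sum>y\<in>UNIV. \<Sum>u\<in>UNIV. mp (NN P S) n a u * NN P S u y)"
    unfolding tau_def mp_Suc_right ..
  also have "\<dots> = (\<Sum>u\<in>UNIV. mp (NN P S) n a u * (\<Sum>y\<in>UNIV. NN P S u y))"
    by (subst sum.swap) (simp add: sum_distrib_left)
  finally have 2: "tau P S (Suc n) a = \<dots>" .
  have 3: "(\<Sum>z\<in>UNIV. (if z \<in> S then P u z else 0)) + (\<Sum>y\<in>UNIV. NN P S u y) = 1" for u
  proof -
    have "(\<Sum>z\<in>UNIV. (if z \<in> S then P u z else 0)) + (\<Sum>y\<in>UNIV. NN P S u y)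
       = (\<Sum>z\<in>UNIV. (if z \<in> S then P u z else 0) + NN P S u z)"
      by (simp add: sum.distrib)
    also have "\<dots> = (\<Sum>z\<in>UNIV. P u z)" by (rule sum.cong) (auto simp: NN_def)
    finally show ?thesis using assms by (simp add: stochastic_def)
  qed
  have "pp P S (Suc n) a + tau P S (Suc n) a = (\<Sum>u\<in>UNIV. mp (NN P S) n a u * ((\<Sum>z\<in>UNIV. (if z \<in> S then P u z else 0)) + (\<Sum>y\<in>UNIV. NN P S u y)))"
    unfolding 1 2 by (simp add: sum.distrib distrib_left)
  also have "\<dots> = (\<Sum>u\<in>UNIV. mp (NN P S) n a u)" using 3 by simp
  finally have "pp P S (Suc n) a + tau P S (Suc n) a = (\<Sum>u\<in>UNIV. mp (NN P S) n a u)" .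
  then show ?thesis unfolding tau_def by simp
qed

lemma pp_0: "pp P S 0 a = 0" by (simp add: pp_def)
lemma tau_0: "tau P S 0 a = 1" by (simp add: tau_def)

lemma pp_nonneg: "stochastic P \<Longrightarrow> pp P S n a \<ge> 0"
  unfolding pp_def by (auto intro!: sum_nonneg hitp_nonneg)
lemma tau_nonneg: "stochastic P \<Longrightarrow> tau P S n a \<ge> 0"
  unfolding tau_def by (auto intro!: sum_nonneg mp_nonneg MN_nonneg)
lemma tau_Suc_le: "stochastic P \<Longrightarrow> tau P S (Suc n) a \<le> tau P S n a"
  using pp_Suc[of P S n a] pp_nonneg[of P S "Suc n" a] by simp
lemma tau_mono: assumes "stochastic P" "n \<le> m" shows "tau P S m a \<le> tau P S n a"
  using assms(2)
proof (induction m rule: dec_induct)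
  case base then show ?case by simp
next
  case (step k) then show ?case using tau_Suc_le[OF assms(1), of S k a] by simp
qed
lemma tau_le1: "stochastic P \<Longrightarrow> tau P S n a \<le> 1"
  using tau_mono[of P 0 n S a] by (simp add: tau_0)
lemma pp_partial: "stochastic P \<Longrightarrow> (\<Sum>n<Suc K. pp P S n a) = 1 - tau P S K a"
  by (induction K) (auto simp: pp_0 tau_0 pp_Suc)

lemma mp_Suc_ge:
  assumes "\<And>a b. M a b \<ge> 0"
  shows "M w v * mp M n v b \<le> mp M (Suc n) w b"
  unfolding mp.simps
  by (rule member_le_sum) (auto intro!: mult_nonneg_nonneg mp_nonneg assms)

lemma escape_bounds:
  assumes "stochastic P"
  shows "summable (\<lambda>n. hitp_at P {a, b} n a b)" "escape P a b \<le> 1"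
proof -
  have le: "hitp_at P {a, b} n a b \<le> pp P {a, b} n a" for n
    unfolding pp_def by (rule member_le_sum) (auto intro!: hitp_nonneg assms)
  have bd: "(\<Sum>n<K. hitp_at P {a, b} n a b) \<le> 1" for K
  proof (cases K)
    case 0 then show ?thesis by simp
  next
    case (Suc K')
    have "(\<Sum>n<K. hitp_at P {a, b} n a b) \<le> (\<Sum>n<K. pp P {a, b} n a)"
      by (rule sum_mono) (rule le)
    also have "\<dots> = 1 - tau P {a, b} K' a" using Suc pp_partial[OF assms] by simp
    also have "\<dots> \<le> 1" using tau_nonneg[OF assms] by simp
    finally show ?thesis .
  qed
  show sm: "summable (\<lambda>n. hitp_at P {a, b} n a b)"
    by (rule summableI_nonneg_bounded[where x=1]) (auto intro: hitp_nonneg assms bd)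
  show "escape P a b \<le> 1"
    unfolding escape_def by (rule suminf_le_const[OF sm bd])
qed

lemma escape_pos:
  assumes "stochastic P" "irreducible P" "a \<noteq> b"
  shows "escape P a b > 0"
proof -
  let ?R = "{(a, b). P a b > 0}"
  let ?M = "MM P {a, b}"
  have Mnn: "\<And>a b. ?M a b \<ge> 0" using MN_nonneg[OF assms(1)] by blast
  have G: "(\<exists>n. mp ?M n w b > 0 \<and> w \<noteq> a) \<or> (\<exists>v n. P a v > 0 \<and> mp ?M n v b > 0)"
    if "(w, b) \<in> ?R\<^sup>*" for w
    using that
  proof (induction rule: converse_rtrancl_induct)
    case base
    then show ?case using assms(3) by (intro disjI1 exI[of _ 0]) auto
  next
    case (step w v)
    show ?case
    proof (cases "\<exists>v n. P a v > 0 \<and> mp ?M n v b > 0")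
      case True then show ?thesis by blast
    next
      case False
      with step.IH obtain n where n: "mp ?M n v b > 0" "v \<noteq> a" by blast
      have Pwv: "P w v > 0" using step.hyps(1) by simp
      show ?thesis
      proof (cases "w = a")
        case True
        then show ?thesis using n Pwv by blast
      next
        case wa: False
        show ?thesis
        proof (cases "w = b")
          case True then show ?thesis using wa by (intro disjI1 exI[of _ 0]) auto
        next
          case False
          have "?M w v * mp ?M n v b \<le> mp ?M (Suc n) w b" by (rule mp_Suc_ge[OF Mnn])
          moreover have "?M w v * mp ?M n v b > 0" using wa False Pwv n by (simp add: MM_def)
          ultimately show ?thesis using wa by (intro disjI1 exI[of _ "Suc n"]) auto
        qed
      qed
    qed
  qed
  have "(a, b) \<in> ?R\<^sup>*" using assms(2) by (simp add: irreducible_def)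
  from G[OF this] obtain v n where vn: "P a v > 0" "mp ?M n v b > 0" by blast
  have "P a v * mp ?M n v b \<le> hitp_at P {a, b} (Suc n) a b"
    unfolding hitp_at.simps hit_mp
    by (rule order_trans[OF _ member_le_sum[of v]])
       (auto intro!: mult_nonneg_nonneg mp_nonneg Mnn simp: stochastic_def assms(1)[unfolded stochastic_def])
  moreover have "P a v * mp ?M n v b > 0" using vn by simp
  ultimately have pos: "hitp_at P {a, b} (Suc n) a b > 0" by linarith
  show ?thesis unfolding escape_def
    by (rule suminf_pos2[OF escape_bounds(1)[OF assms(1)] _ pos]) (rule hitp_nonneg[OF assms(1)])
qed

lemma uP_bounds:
  assumes "stochastic P" "irreducible P" "card (UNIV :: 'a set) \<ge> 2"
  shows "0 < u_P (P :: 'a::finite \<Rightarrow> 'a \<Rightarrow> real)" "u_P P \<le> 1"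
proof -
  let ?E = "{escape P x y | x y. x \<noteq> y}"
  have fin: "finite ?E"
  proof -
    have "?E \<subseteq> (\<lambda>(x, y). escape P x y) ` UNIV" by auto
    then show ?thesis by (rule finite_subset) simp
  qed
  obtain a b :: 'a where ab: "a \<noteq> b"
  proof -
    have "\<not> (\<forall>a b :: 'a. a = b)"
    proof
      assume "\<forall>a b :: 'a. a = b"
      then have "UNIV \<subseteq> {undefined :: 'a}" by auto
      then have "card (UNIV :: 'a set) \<le> 1" using card_mono[of "{undefined :: 'a}"] by fastforce
      then show False using assms(3) by simp
    qed
    then show ?thesis using that by blast
  qed
  have ne: "?E \<noteq> {}" using ab by blast
  show "0 < u_P P" unfolding u_P_def
    using fin ne escape_pos[OF assms(1,2)] by (subst Min_gr_iff) auto
  have "u_P P \<le> escape P a b" unfolding u_P_def using fin ab by (intro Min_le) auto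
  then show "u_P P \<le> 1" using escape_bounds(2)[OF assms(1), of a b] by simp
qed

lemma path_lemma:
  assumes "stochastic P" "(u, s) \<in> {(a, b). P a b > 0}\<^sup>+" "s \<in> S"
  shows "\<exists>j v z. mp (NN P S) j u v > 0 \<and> z \<in> S \<and> P v z > 0"
  using assms(2,3)
proof (induction rule: converse_trancl_induct)
  case (base u)
  then show ?case by (intro exI[of _ 0] exI[of _ u] exI[of _ s]) auto
next
  case (step u w)
  show ?case
  proof (cases "w \<in> S")
    case True then show ?thesis using step.hyps(1) by (intro exI[of _ 0] exI[of _ u] exI[of _ w]) auto
  next
    case False
    from step.IH[OF step.prems] obtain j v z where jvz: "mp (NN P S) j w v > 0" "z \<in> S" "P v z > 0" by blast
    have "NN P S u w * mp (NN P S) j w v \<le> mp (NN P S) (Suc j) u v"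
      by (rule mp_Suc_ge) (rule MN_nonneg[OF assms(1)])
    moreover have "NN P S u w * mp (NN P S) j w v > 0" using False step.hyps(1) jvz by (simp add: NN_def)
    ultimately show ?thesis using jvz by (intro exI[of _ "Suc j"] exI[of _ v] exI[of _ z]) auto
  qed
qed

lemma tau_lt1:
  assumes "stochastic P" "irreducible P" "card (UNIV :: 'a set) \<ge> 2" "x \<in> S"
  shows "\<exists>k. tau P S k (u::'a::finite) < 1"
proof -
  let ?R = "{(a, b). P a b > 0}"
  have rt: "(a, b) \<in> ?R\<^sup>*" for a b using assms(2) by (simp add: irreducible_def)
  have "(u, x) \<in> ?R\<^sup>+"
  proof (cases "u = x")
    case False then show ?thesis using rt[of u x] by (simp add: rtrancl_eq_or_trancl)
  next
    case True
    obtain z :: 'a where z: "z \<noteq> x"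
    proof -
      have "\<not> (\<forall>z :: 'a. z = x)"
      proof
        assume "\<forall>z :: 'a. z = x"
        then have "UNIV = {x}" by auto
        then have "card (UNIV :: 'a set) = card {x}" by (rule arg_cong)
        then show False using assms(3) by simp
      qed
      then show ?thesis using that by blast
    qed
    have "(x, z) \<in> ?R\<^sup>+" using rt[of x z] z by (simp add: rtrancl_eq_or_trancl)
    then have "(x, x) \<in> ?R\<^sup>+" using rt[of z x] by (rule trancl_rtrancl_trancl)
    then show ?thesis using True by simp
  qed
  from path_lemma[OF assms(1) this assms(4)] obtain j v z where
    jvz: "mp (NN P S) j u v > 0" "z \<in> S" "P v z > 0" by blast
  have "mp (NN P S) j u v * P v z \<le> (\<Sum>u'\<in>UNIV. mp (NN P S) j u u' * P u' z)"
    by (rule member_le_sum) (auto intro!: mult_nonneg_nonneg mp_nonneg MN_nonneg assms(1)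
        simp: assms(1)[unfolded stochastic_def])
  also have "\<dots> = hitp_at P S (Suc j) u z" using jvz by (subst hitp_Suc) simp
  also have "\<dots> \<le> pp P S (Suc j) u"
    unfolding pp_def by (rule member_le_sum) (simp_all add: hitp_nonneg[OF assms(1)] del: hitp_at.simps)
  finally have "pp P S (Suc j) u > 0" using jvz by (smt (verit) mult_pos_pos)
  then have "tau P S (Suc j) u < 1" using pp_Suc[OF assms(1), of S j u] tau_le1[OF assms(1), of S j u] by simp
  then show ?thesis by blast
qed

lemma tau_add: "tau P S (n + m) a = (\<Sum>u\<in>UNIV. mp (NN P S) n a u * tau P S m u)"
  unfolding tau_def mp_add by (subst sum.swap) (simp add: sum_distrib_left)

lemma tau_contract:
  assumes "stochastic P" "irreducible P" "card (UNIV :: 'a set) \<ge> 2" "x \<in> S"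
  shows "\<exists>m c. 0 < m \<and> 0 < c \<and> c < 1 \<and> (\<forall>u::'a::finite. tau P S m u \<le> c)"
proof -
  obtain k where k: "\<And>u. tau P S (k u) u < 1" using tau_lt1[OF assms] by metis
  define m where "m = Max (range k)"
  have km: "k u \<le> m" for u unfolding m_def by simp
  have kpos: "k u > 0" for u using k[of u] by (cases "k u") (auto simp: tau_0)
  define c where "c = max (1/2) (Max (range (\<lambda>u. tau P S m u)))"
  have lt: "tau P S m u < 1" for u using tau_mono[OF assms(1) km[of u], of S u] k[of u] by simp
  have "Max (range (\<lambda>u. tau P S m u)) < 1" using lt by (subst Max_less_iff) auto
  then have "c < 1" unfolding c_def by simp
  moreover have "tau P S m u \<le> c" for u unfolding c_def by (rule max.coboundedI2) simp
  moreover have "0 < m" using km[of undefined] kpos[of undefined] by simp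
  moreover have "0 < c" unfolding c_def by simp
  ultimately show ?thesis by blast
qed

lemma tau_geom:
  assumes "stochastic P" "irreducible P" "card (UNIV :: 'a set) \<ge> 2" "x \<in> S"
  shows "\<exists>\<rho> C. 0 < \<rho> \<and> \<rho> < 1 \<and> 0 < C \<and> (\<forall>n (a::'a::finite). tau P S n a \<le> C * \<rho> ^ n)"
proof -
  obtain m c where mc: "0 < m" "0 < c" "c < 1" "\<And>u::'a. tau P S m u \<le> c"
    using tau_contract[OF assms] by blast
  have km: "tau P S (k * m) a \<le> c ^ k" for k a
  proof (induction k arbitrary: a)
    case 0 then show ?case by (simp add: tau_0)
  next
    case (Suc k)
    have "tau P S (Suc k * m) a = (\<Sum>u\<in>UNIV. mp (NN P S) (k * m) a u * tau P S m u)"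
      by (simp add: tau_add[symmetric] add.commute)
    also have "\<dots> \<le> (\<Sum>u\<in>UNIV. mp (NN P S) (k * m) a u * c)"
      by (rule sum_mono, rule mult_left_mono) (auto intro!: mc(4) mp_nonneg MN_nonneg assms(1))
    also have "\<dots> = c * tau P S (k * m) a" by (simp add: tau_def sum_distrib_left mult.commute)
    also have "\<dots> \<le> c * c ^ k" using Suc mc(2) by (simp add: mult_left_mono)
    finally show ?case by simp
  qed
  define \<rho> where "\<rho> = root m c"
  have r0: "0 < \<rho>" using mc unfolding \<rho>_def by simp
  have r1: "\<rho> < 1" using mc unfolding \<rho>_def by simp
  have rm: "\<rho> ^ m = c" using mc unfolding \<rho>_def by simp
  have "tau P S n a \<le> (1 / c) * \<rho> ^ n" for n a
  proof -
    have "tau P S n a \<le> tau P S ((n div m) * m) a"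
      by (rule tau_mono[OF assms(1)]) simp
    also have "\<dots> \<le> c ^ (n div m)" by (rule km)
    also have "\<dots> = \<rho> ^ (m * (n div m))" by (simp add: power_mult rm)
    also have "\<dots> = \<rho> ^ (m * (n div m) + m) / c" using mc by (simp add: power_add rm)
    also have "\<dots> \<le> \<rho> ^ n / c"
    proof -
      have "n \<le> m * (n div m) + m"
        by (metis add_le_cancel_left div_mult_mod_eq less_or_eq_imp_le mc(1) mod_less_divisor
              mult.commute add.commute)
      then have "\<rho> ^ (m * (n div m) + m) \<le> \<rho> ^ n" by (rule power_decreasing) (use r0 r1 in auto)
      then show ?thesis using mc by (simp add: divide_right_mono)
    qed
    finally show ?thesis by simp
  qed
  then show ?thesis using r0 r1 mc by (intro exI[of _ \<rho>] exI[of _ "1/c"]) auto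
qed

lemma summable_n_pow:
  fixes \<rho> :: real
  assumes "0 \<le> \<rho>" "\<rho> < 1"
  shows "summable (\<lambda>n. real n * \<rho> ^ n)"
proof -
  define s where "s = sqrt \<rho>"
  have s0: "0 \<le> s" and s1: "s < 1" using assms unfolding s_def by auto
  have ss: "s * s = \<rho>" using assms unfolding s_def by simp
  have "(\<lambda>n. of_nat n * s ^ n) \<longlonglongrightarrow> 0" by (rule powser_times_n_limit_0) (use s0 s1 in simp)
  then have ev: "eventually (\<lambda>n. real n * s ^ n < 1) sequentially"
    by (rule order_tendstoD(2)) simp
  have "eventually (\<lambda>n. norm (real n * \<rho> ^ n) \<le> s ^ n) sequentially"
    using ev
  proof (rule eventually_mono)
    fix n assume h: "real n * s ^ n < 1"
    have "norm (real n * \<rho> ^ n) = (real n * s ^ n) * s ^ n"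
      using assms by (simp add: ss[symmetric] power_mult_distrib)
    also have "\<dots> \<le> 1 * s ^ n" using h s0 by (intro mult_right_mono) auto
    finally show "norm (real n * \<rho> ^ n) \<le> s ^ n" by simp
  qed
  then show ?thesis by (rule summable_comparison_test_ev) (use s0 s1 in simp)
qed

lemma reversal:
  assumes "reversible P \<pi>"
  shows "\<pi> y * mp (MM P S) n y x = \<pi> x * mp (NN P S) n x y"
proof (induction n arbitrary: y)
  case 0 then show ?case by auto
next
  case (Suc n)
  have r: "\<pi> y * MM P S y w = \<pi> w * NN P S w y" for w
    using assms unfolding reversible_def MM_def NN_def by auto
  have "\<pi> y * mp (MM P S) (Suc n) y x = (\<Sum>w\<in>UNIV. (\<pi> y * MM P S y w) * mp (MM P S) n w x)"
    by (simp add: sum_distrib_left mult.assoc)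
  also have "\<dots> = (\<Sum>w\<in>UNIV. NN P S w y * (\<pi> w * mp (MM P S) n w x))"
    unfolding r by (simp add: mult_ac)
  also have "\<dots> = (\<Sum>w\<in>UNIV. NN P S w y * (\<pi> x * mp (NN P S) n x w))"
    using Suc by simp
  also have "\<dots> = \<pi> x * mp (NN P S) (Suc n) x y"
    unfolding mp_Suc_right by (simp add: sum_distrib_left mult_ac)
  finally show ?case .
qed

theorem mainTheorem4:
  fixes P :: "'a::finite \<Rightarrow> 'a \<Rightarrow> real" and \<pi> :: "'a \<Rightarrow> real"
    and S :: "'a set" and x :: 'a
  assumes "card (UNIV :: 'a set) \<ge> 2"
    and "stochastic P"
    and "irreducible P"
    and "prob_vec \<pi>"
    and "reversible P \<pi>"
    and "x \<in> S"
  shows "harm_stat P \<pi> S x \<le> inverse (u_P P) * \<pi> x * exp_return P S x"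
proof -
  note st = assms(2)
  obtain \<rho> C where rC: "0 < \<rho>" "\<rho> < 1" "0 < C" "\<And>n a. tau P S n a \<le> C * \<rho> ^ n"
    using tau_geom[OF assms(2,3,1,6)] by blast
  define t where "t n = tau P S n x" for n
  define f where "f n = real n * pp P S n x" for n
  have t0: "t n \<ge> 0" for n unfolding t_def by (rule tau_nonneg[OF st])
  have sum_t: "summable t"
    by (rule summable_comparison_test[where g="\<lambda>n. C * \<rho> ^ n"])
       (use rC t0 in \<open>auto simp: t_def intro!: summable_mult summable_geometric\<close>)
  have fS: "f (Suc n) = real (Suc n) * (t n - t (Suc n))" for n
    unfolding f_def t_def by (simp add: pp_Suc[OF st])
  have sn: "summable (\<lambda>n. real n * \<rho> ^ n)" by (rule summable_n_pow) (use rC in auto)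
  have "summable (\<lambda>n. f (Suc n))"
  proof (rule summable_comparison_test[where g="\<lambda>n. C * (real n * \<rho> ^ n) + C * \<rho> ^ n"])
    show "summable (\<lambda>n. C * (real n * \<rho> ^ n) + C * \<rho> ^ n)"
      using sn rC by (intro summable_add summable_mult summable_geometric) auto
    have "norm (f (Suc n)) \<le> C * (real n * \<rho> ^ n) + C * \<rho> ^ n" for n
    proof -
      have "t (Suc n) \<le> t n" unfolding t_def by (rule tau_Suc_le[OF st])
      then have "0 \<le> f (Suc n)" unfolding fS by simp
      moreover have "f (Suc n) \<le> real (Suc n) * t n" unfolding fS using t0[of "Suc n"]
        by (simp add: mult_left_mono)
      moreover have "real (Suc n) * t n \<le> real (Suc n) * (C * \<rho> ^ n)"
        using rC(4)[of n x] by (intro mult_left_mono) (auto simp: t_def)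
      ultimately show ?thesis by (simp add: algebra_simps)
    qed
    then show "\<exists>N. \<forall>n\<ge>N. norm (f (Suc n)) \<le> C * (real n * \<rho> ^ n) + C * \<rho> ^ n" by blast
  qed
  then have sum_f: "summable f" by (simp add: summable_Suc_iff)
  have E: "exp_return P S x = suminf f" unfolding exp_return_def f_def pp_def ..
  have Ef: "suminf f = (\<Sum>n. f (Suc n))" using suminf_split_head[OF sum_f] by (simp add: f_def)
  have ntlim: "(\<lambda>N. real N * t N) \<longlonglongrightarrow> 0"
  proof (rule tendsto_sandwich[where f="\<lambda>_. 0" and h="\<lambda>N. C * (real N * \<rho> ^ N)"])
    show "eventually (\<lambda>N. 0 \<le> real N * t N) sequentially" using t0 by simp
    show "eventually (\<lambda>N. real N * t N \<le> C * (real N * \<rho> ^ N)) sequentially"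
    proof (intro always_eventually allI)
      fix N
      have "real N * tau P S N x \<le> real N * (C * \<rho> ^ N)" by (rule mult_left_mono[OF rC(4)]) simp
      then show "real N * t N \<le> C * (real N * \<rho> ^ N)" by (simp add: t_def mult_ac)
    qed
    show "(\<lambda>N. C * (real N * \<rho> ^ N)) \<longlonglongrightarrow> 0"
      using tendsto_mult_right_zero[OF summable_LIMSEQ_zero[OF sn], of C] by simp
  qed simp
  have ident: "(\<Sum>n<N. t n) = (\<Sum>n<N. f (Suc n)) + real N * t N" for N
    by (induction N) (simp_all add: fS algebra_simps)
  have "(\<lambda>N. \<Sum>n<N. t n) \<longlonglongrightarrow> (\<Sum>n. f (Suc n)) + 0"
    unfolding ident
    by (intro tendsto_add summable_LIMSEQ ntlim \<open>summable (\<lambda>n. f (Suc n))\<close>)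
  then have TE: "suminf t = exp_return P S x"
    using LIMSEQ_unique[OF summable_LIMSEQ[OF sum_t]] E Ef by simp
  have hy: "\<pi> y * harm P y S x = (\<Sum>n. \<pi> x * mp (NN P S) n x y)" for y
  proof -
    have rv: "\<pi> y * hit_at P S n y x = \<pi> x * mp (NN P S) n x y" for n
      using reversal[OF assms(5)] assms(6) by (simp add: hit_mp)
    have smp: "summable (\<lambda>n. mp (NN P S) n x y)"
    proof (rule summable_comparison_test[where g=t])
      have "mp (NN P S) n x y \<le> t n" for n unfolding t_def tau_def
        by (rule member_le_sum) (auto intro!: mp_nonneg MN_nonneg st)
      then show "\<exists>N. \<forall>n\<ge>N. norm (mp (NN P S) n x y) \<le> t n"
        by (auto intro!: exI[of _ 0] simp: mp_nonneg MN_nonneg st)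
    qed (rule sum_t)
    show ?thesis
    proof (cases "\<pi> y = 0")
      case True
      then have "\<And>n. \<pi> x * mp (NN P S) n x y = 0" using rv by (metis mult_zero_left)
      then have "(\<lambda>n. \<pi> x * mp (NN P S) n x y) = (\<lambda>n. 0)" by (rule ext)
      then show ?thesis using True by simp
    next
      case False
      have eq: "hit_at P S n y x = (1 / \<pi> y) * (\<pi> x * mp (NN P S) n x y)" for n
        using rv[of n] False by (simp add: field_simps)
      have "summable (\<lambda>n. hit_at P S n y x)"
        unfolding eq by (intro summable_mult summable_mult smp)
      then have "\<pi> y * harm P y S x = (\<Sum>n. \<pi> y * hit_at P S n y x)"
        unfolding harm_def by (simp add: suminf_mult)
      then show ?thesis unfolding rv .
    qed
  qed
  have smp2: "summable (\<lambda>n. \<pi> x * mp (NN P S) n x y)" for y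
  proof -
    have "summable (\<lambda>n. mp (NN P S) n x y)"
    proof (rule summable_comparison_test[where g=t])
      have "mp (NN P S) n x y \<le> t n" for n unfolding t_def tau_def
        by (rule member_le_sum) (auto intro!: mp_nonneg MN_nonneg st)
      then show "\<exists>N. \<forall>n\<ge>N. norm (mp (NN P S) n x y) \<le> t n"
        by (auto intro!: exI[of _ 0] simp: mp_nonneg MN_nonneg st)
    qed (rule sum_t)
    then show ?thesis by (rule summable_mult)
  qed
  have "harm_stat P \<pi> S x = (\<Sum>y\<in>UNIV. \<Sum>n. \<pi> x * mp (NN P S) n x y)"
    unfolding harm_stat_def hy ..
  also have "\<dots> = (\<Sum>n. \<Sum>y\<in>UNIV. \<pi> x * mp (NN P S) n x y)"
    by (rule suminf_sum[symmetric]) (rule smp2)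
  also have "\<dots> = (\<Sum>n. \<pi> x * t n)"
    unfolding t_def tau_def by (simp add: sum_distrib_left)
  also have "\<dots> = \<pi> x * suminf t" by (rule suminf_mult[OF sum_t])
  finally have H: "harm_stat P \<pi> S x = \<pi> x * exp_return P S x" unfolding TE .
  have u: "0 < u_P P" "u_P P \<le> 1" using uP_bounds[OF assms(2,3,1)] by auto
  have inv: "1 \<le> inverse (u_P P)" using u by (simp add: one_le_inverse)
  have px: "0 \<le> \<pi> x" using assms(4) by (simp add: prob_vec_def)
  have "0 \<le> exp_return P S x" unfolding TE[symmetric] by (rule suminf_nonneg[OF sum_t t0])
  then have "0 \<le> \<pi> x * exp_return P S x" using px by simp
  then have "1 * (\<pi> x * exp_return P S x) \<le> inverse (u_P P) * (\<pi> x * exp_return P S x)"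
    by (rule mult_right_mono[OF inv])
  then show ?thesis unfolding H by (simp add: mult.assoc)
qed

end
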